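(* Let $P_1,\dots,P_L\subset\mathbb{R}^N$ be finitely many polytopes. For each $j$, let $v^{(j)}(x)$ denote a vertex of $P_j$ closest to $x$ in Euclidean norm (with some fixed tie-breaking rule) and, for $\gamma\in P_j$, let $\phi^{(j)}_\gamma(x)=x+(\gamma-v^{(j)}(x))$. Then there exists a bounded convex set $Q_\infty\subset\mathbb{R}^N$ such that for each $j\in\{1,\dots,L\}$ there is $\rho_j>0$ with $\phi^{(j)}_\gamma(\rho Q_\infty)\subset\rho Q_\infty$ for all $\gamma\in P_j$ and all $\rho\ge\rho_j$.
   Context: $\rho Q_\infty=\{\rho q: q\in Q_\infty\}$. *)

theory Defs
  imports "HOL-Analysis.Analysis"
begin

text \<open>A choice of a vertex (extreme point) of P closest to each point x in Euclidean
  distance; any fixed tie-breaking rule gives such a function.\<close>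
definition closest_vertex_choice :: "'a::euclidean_space set \<Rightarrow> ('a \<Rightarrow> 'a) \<Rightarrow> bool" where
  "closest_vertex_choice P v \<longleftrightarrow>
     (\<forall>x. v x extreme_point_of P \<and> (\<forall>w. w extreme_point_of P \<longrightarrow> dist x (v x) \<le> dist x w))"

definition phi_map :: "('a::euclidean_space \<Rightarrow> 'a) \<Rightarrow> 'a \<Rightarrow> 'a \<Rightarrow> 'a" where
  "phi_map v \<gamma> x = x + (\<gamma> - v x)"

end

theory Submission
  imports Defs
begin

lemma finite_pos_lb:
  fixes X :: "real set"
  assumes "finite X" "\<forall>x\<in>X. 0 < x"
  shows "\<exists>e>0. e \<le> 1 \<and> (\<forall>x\<in>X. e \<le> x)"
proof -
  let ?e = "Min (insert 1 X)"
  have "?e > 0" using assms by (subst Min_gr_iff) auto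
  moreover have "?e \<le> 1" using assms by auto
  moreover have "\<forall>x\<in>X. ?e \<le> x" using assms by auto
  ultimately show ?thesis by blast
qed

lemma polytope_facts:
  fixes P :: "'a::euclidean_space set"
  assumes "polytope P"
  shows "finite {w. w extreme_point_of P}" "P \<subseteq> convex hull {w. w extreme_point_of P}"
proof -
  obtain S where S: "finite S" "P = convex hull S" using assms unfolding polytope_def by blast
  show "finite {w. w extreme_point_of P}"
    using S extreme_points_of_convex_hull finite_subset by metis
  have "compact P" "convex P" using S finite_imp_compact_convex_hull by auto
  then show "P \<subseteq> convex hull {w. w extreme_point_of P}"
    using Krein_Milman_Minkowski by blast
qed

lemma convex_D:
  fixes N :: "'a::euclidean_space set"
  shows "convex {z::'a. norm z \<le> c \<and> (\<forall>n\<in>N. n \<bullet> z \<le> f n)}"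
  unfolding convex_def
proof (intro allI impI ballI, clarify, intro conjI ballI)
  fix x y :: 'a and u v :: real
  assume x: "norm x \<le> c" "\<forall>n\<in>N. n \<bullet> x \<le> f n" and y: "norm y \<le> c" "\<forall>n\<in>N. n \<bullet> y \<le> f n"
    and uv: "0 \<le> u" "0 \<le> v" "u + v = 1"
  have "norm (u *\<^sub>R x + v *\<^sub>R y) \<le> u * norm x + v * norm y"
    using uv by (metis norm_triangle_le norm_scaleR abs_of_nonneg order_refl)
  also have "\<dots> \<le> u * c + v * c" using uv x y by (simp add: add_mono mult_left_mono)
  finally show "norm (u *\<^sub>R x + v *\<^sub>R y) \<le> c" using uv by (simp add: distrib_right[symmetric])
  fix n assume n: "n \<in> N"
  have "n \<bullet> (u *\<^sub>R x + v *\<^sub>R y) = u * (n \<bullet> x) + v * (n \<bullet> y)" by (simp add: inner_add_right)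
  also have "\<dots> \<le> u * f n + v * f n" using uv x y n by (simp add: add_mono mult_left_mono)
  finally show "n \<bullet> (u *\<^sub>R x + v *\<^sub>R y) \<le> f n" using uv by (simp add: distrib_right[symmetric])
qed

theorem theorem6p2:
  fixes L :: nat and P :: "nat \<Rightarrow> 'a::euclidean_space set" and v :: "nat \<Rightarrow> 'a \<Rightarrow> 'a"
  assumes "\<forall>j\<in>{1..L}. polytope (P j)"
    and "\<forall>j\<in>{1..L}. closest_vertex_choice (P j) (v j)"
  shows "\<exists>Q::'a set. bounded Q \<and> convex Q \<and> Q \<noteq> {} \<and>
     (\<forall>j\<in>{1..L}. \<exists>\<rho>j>0. \<forall>\<gamma>\<in>P j. \<forall>\<rho>\<ge>\<rho>j.
         phi_map (v j) \<gamma> ` ((\<lambda>q. \<rho> *\<^sub>R q) ` Q) \<subseteq> (\<lambda>q. \<rho> *\<^sub>R q) ` Q)"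
proof -
  define V where "V = (\<Union>j\<in>{1..L}. {w. w extreme_point_of P j})"
  have finV: "finite V" unfolding V_def using assms(1) polytope_facts(1) by auto
  define A where "A = (\<lambda>(w,w'). w - w') ` (V \<times> V)"
  have finA: "finite A" unfolding A_def using finV by auto
  define R where "R = 1 + (\<Sum>w\<in>V. norm w)"
  have Rpos: "R > 0" unfolding R_def by (simp add: add_pos_nonneg sum_nonneg)
  have Rw: "norm w \<le> R" if "w \<in> V" for w
  proof -
    have "norm w \<le> (\<Sum>w\<in>V. norm w)" by (rule member_le_sum[OF that _ finV]) auto
    then show ?thesis unfolding R_def by simp
  qed
  define K where "K = 2 * R"
  have "\<forall>u. \<exists>r. 0 < r \<and> r \<le> 1 \<and> (\<forall>a\<in>A. 0 < u \<bullet> a \<longrightarrow> r * norm a \<le> u \<bullet> a / 2)"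
  proof
    fix u :: 'a
    let ?X = "(\<lambda>a. u \<bullet> a / (2 * norm a)) ` {a\<in>A. 0 < u \<bullet> a}"
    have "finite ?X" using finA by auto
    moreover have "\<forall>x\<in>?X. 0 < x"
    proof
      fix x assume "x \<in> ?X"
      then obtain a where a: "a \<in> A" "0 < u \<bullet> a" "x = u \<bullet> a / (2 * norm a)" by auto
      then have "a \<noteq> 0" by auto
      then show "0 < x" using a by simp
    qed
    ultimately obtain e where e: "e > 0" "e \<le> 1" "\<forall>x\<in>?X. e \<le> x" using finite_pos_lb by blast
    have "\<forall>a\<in>A. 0 < u \<bullet> a \<longrightarrow> e * norm a \<le> u \<bullet> a / 2"
    proof (intro ballI impI)
      fix a assume a: "a \<in> A" "0 < u \<bullet> a"
      then have na: "norm a > 0" by auto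
      have "e \<le> u \<bullet> a / (2 * norm a)" using e(3) a by auto
      then have "e * norm a \<le> u \<bullet> a / (2 * norm a) * norm a" by (rule mult_right_mono) simp
      also have "\<dots> = u \<bullet> a / 2" using na by (simp add: field_simps)
      finally show "e * norm a \<le> u \<bullet> a / 2" .
    qed
    then show "\<exists>r. 0 < r \<and> r \<le> 1 \<and> (\<forall>a\<in>A. 0 < u \<bullet> a \<longrightarrow> r * norm a \<le> u \<bullet> a / 2)"
      using e by blast
  qed
  then obtain r where r: "\<And>u. 0 < r u" "\<And>u. r u \<le> 1"
      "\<And>u a. a \<in> A \<Longrightarrow> 0 < u \<bullet> a \<Longrightarrow> r u * norm a \<le> u \<bullet> a / 2"
    by metis
  define t where "t u = 1 - (r u)^2 / 4" for u
  define t' where "t' u = 1 - (r u)^2 / 8" for u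
  have rsq: "0 < (r u)^2" "(r u)^2 \<le> 1" for u
    using r(1,2)[of u] by (auto simp: power_le_one)
  have cover: "sphere (0::'a) 1 \<subseteq> (\<Union>u\<in>sphere 0 1. {y. u \<bullet> y > t' u})"
  proof
    fix u :: 'a assume u: "u \<in> sphere 0 1"
    have "u \<bullet> u = 1" using u by (simp add: dot_square_norm)
    moreover have "t' u < 1" unfolding t'_def using rsq[of u] by simp
    ultimately show "u \<in> (\<Union>u\<in>sphere 0 1. {y. u \<bullet> y > t' u})" using u by (intro UN_I[of u]) auto
  qed
  obtain N where N: "N \<subseteq> sphere 0 1" "finite N" "sphere 0 1 \<subseteq> (\<Union>u\<in>N. {y. u \<bullet> y > t' u})"
    using compactE_image[OF compact_sphere _ cover] open_halfspace_gt by metis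
  have "finite ((\<lambda>(n,a). n \<bullet> a) ` {(n,a). n \<in> N \<and> a \<in> A \<and> 0 < n \<bullet> a})"
    by (rule finite_imageI, rule finite_subset[of _ "N \<times> A"]) (use N(2) finA in auto)
  then obtain g where g: "g > 0" "\<And>n a. n \<in> N \<Longrightarrow> a \<in> A \<Longrightarrow> 0 < n \<bullet> a \<Longrightarrow> g \<le> n \<bullet> a"
    using finite_pos_lb[of "(\<lambda>(n,a). n \<bullet> a) ` {(n,a). n \<in> N \<and> a \<in> A \<and> 0 < n \<bullet> a}"] by fastforce
  obtain rm where rm: "rm > 0" "\<And>n. n \<in> N \<Longrightarrow> rm \<le> r n"
    using finite_pos_lb[of "r ` N"] N(2) r(1) by fastforce
  define Q where "Q = {y::'a. norm y \<le> 1 \<and> (\<forall>n\<in>N. n \<bullet> y \<le> t n)}"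
  define \<rho>0 where "\<rho>0 = max (8 * K / rm^2) (max (R^2 / g + 1) K)"
  have K0: "K > 0" unfolding K_def using Rpos by simp
  have \<rho>0pos: "\<rho>0 > 0" unfolding \<rho>0_def using K0 by simp
  have tnn: "0 \<le> t n" for n unfolding t_def using rsq[of n] by simp
  have "bounded Q" unfolding Q_def by (rule bounded_subset[OF bounded_cball[of 0 1]]) auto
  moreover have "convex Q" unfolding Q_def by (rule convex_D)
  moreover have "Q \<noteq> {}"
  proof -
    have "(0::'a) \<in> Q" unfolding Q_def using tnn by simp
    then show ?thesis by blast
  qed
  moreover have "\<forall>j\<in>{1..L}. \<exists>\<rho>j>0. \<forall>\<gamma>\<in>P j. \<forall>\<rho>\<ge>\<rho>j.
         phi_map (v j) \<gamma> ` ((\<lambda>q. \<rho> *\<^sub>R q) ` Q) \<subseteq> (\<lambda>q. \<rho> *\<^sub>R q) ` Q"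
  proof (intro ballI exI conjI allI impI)
    fix j assume j: "j \<in> {1..L}"
    show "\<rho>0 > 0" by (rule \<rho>0pos)
    fix \<gamma> \<rho> assume \<gamma>: "\<gamma> \<in> P j" and \<rho>: "\<rho>0 \<le> \<rho>"
    have \<rho>pos: "\<rho> > 0" using \<rho> \<rho>0pos by simp
    have \<rho>K: "K \<le> \<rho>" using \<rho> unfolding \<rho>0_def by simp
    have \<rho>g: "R^2 / g + 1 \<le> \<rho>" using \<rho> unfolding \<rho>0_def by simp
    have \<rho>r: "8 * K / rm^2 \<le> \<rho>" using \<rho> unfolding \<rho>0_def by simp
    have \<rho>r': "8 * K \<le> \<rho> * rm^2" using \<rho>r rm(1) by (simp add: field_simps)
    define D where "D = {z::'a. norm z \<le> \<rho> \<and> (\<forall>n\<in>N. n \<bullet> z \<le> \<rho> * t n)}"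
    have convD: "convex D" unfolding D_def by (rule convex_D)
    have cvc: "closest_vertex_choice (P j) (v j)" using assms(2) j by blast
    have VjV: "{w. w extreme_point_of P j} \<subseteq> V" unfolding V_def using j by blast
    have Dimg: "z \<in> (\<lambda>q. \<rho> *\<^sub>R q) ` Q" if "z \<in> D" for z
    proof (rule image_eqI[of _ _ "z /\<^sub>R \<rho>"])
      show "z = \<rho> *\<^sub>R (z /\<^sub>R \<rho>)" using \<rho>pos by simp
      show "z /\<^sub>R \<rho> \<in> Q" unfolding Q_def
      proof (intro CollectI conjI ballI)
        show "norm (z /\<^sub>R \<rho>) \<le> 1" using that \<rho>pos unfolding D_def by (simp add: field_simps)
        fix n assume "n \<in> N"
        then have "n \<bullet> z \<le> \<rho> * t n" using that unfolding D_def by blast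
        then show "n \<bullet> (z /\<^sub>R \<rho>) \<le> t n" using \<rho>pos by (simp add: field_simps)
      qed
    qed
    show "phi_map (v j) \<gamma> ` ((\<lambda>q. \<rho> *\<^sub>R q) ` Q) \<subseteq> (\<lambda>q. \<rho> *\<^sub>R q) ` Q"
    proof
      fix z assume "z \<in> phi_map (v j) \<gamma> ` ((\<lambda>q. \<rho> *\<^sub>R q) ` Q)"
      then obtain q where q: "q \<in> Q" and z: "z = phi_map (v j) \<gamma> (\<rho> *\<^sub>R q)" by auto
      define x where "x = \<rho> *\<^sub>R q"
      define vx where "vx = v j x"
      have qn: "norm q \<le> 1" "\<And>n. n \<in> N \<Longrightarrow> n \<bullet> q \<le> t n" using q unfolding Q_def by auto
      have xn: "\<And>n. n \<in> N \<Longrightarrow> n \<bullet> x \<le> \<rho> * t n"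
        using qn(2) \<rho>pos unfolding x_def by (simp add: mult_left_mono)
      have vxV: "vx extreme_point_of P j" using cvc unfolding closest_vertex_choice_def vx_def by blast
      have vxclose: "\<And>w. w extreme_point_of P j \<Longrightarrow> dist x vx \<le> dist x w"
        using cvc unfolding closest_vertex_choice_def vx_def by blast
      have normx: "norm x \<le> \<rho> - K"
      proof (cases "x = 0")
        case True then show ?thesis using \<rho>K by simp
      next
        case False
        define u where "u = x /\<^sub>R norm x"
        have "u \<in> sphere 0 1" using False unfolding u_def by simp
        then obtain n where n: "n \<in> N" "n \<bullet> u > t' n" using N(3) by blast
        have nx: "n \<bullet> x = norm x * (n \<bullet> u)" using False unfolding u_def by simp
        have "norm x * t' n < norm x * (n \<bullet> u)" using n(2) False by simp
        also have "\<dots> \<le> \<rho> * t n" using nx xn[OF n(1)] by simp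
        finally have lt: "norm x * t' n < \<rho> * t n" .
        show ?thesis
        proof (rule ccontr)
          assume "\<not> norm x \<le> \<rho> - K"
          then have gt: "\<rho> - K < norm x" by simp
          have t'pos: "0 < t' n" unfolding t'_def using rsq[of n] by simp
          have "(\<rho> - K) * t' n \<le> norm x * t' n" using gt t'pos by simp
          with lt have "(\<rho> - K) * t' n < \<rho> * t n" by simp
          then have "\<rho> * (t' n - t n) < K * t' n" by (simp add: algebra_simps)
          moreover have "t' n - t n = (r n)^2 / 8" unfolding t_def t'_def by simp
          ultimately have "\<rho> * (r n)^2 / 8 < K * t' n" by simp
          also have "\<dots> \<le> K" using K0 rsq[of n] unfolding t'_def by (simp add: mult_left_le)
          finally have "\<rho> * (r n)^2 < 8 * K" by simp
          moreover have "\<rho> * rm^2 \<le> \<rho> * (r n)^2"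
            using rm(2)[OF n(1)] rm(1) \<rho>pos by (simp add: power_mono mult_left_mono)
          ultimately show False using \<rho>r' by simp
        qed
      qed
      have vert: "x + (w - vx) \<in> D" if w: "w extreme_point_of P j" for w
      proof -
        have wV: "w \<in> V" and vV: "vx \<in> V" using w vxV VjV by auto
        define a where "a = w - vx"
        have aA: "a \<in> A" unfolding A_def a_def using wV vV by force
        have na: "norm a \<le> K" unfolding a_def K_def
          using norm_triangle_ineq4[of w vx] Rw[OF wV] Rw[OF vV] by simp
        have "norm (x + a) \<le> norm x + norm a" by (rule norm_triangle_ineq)
        also have "\<dots> \<le> \<rho>" using normx na by simp
        finally have nxa: "norm (x + a) \<le> \<rho>" .
        have "n \<bullet> (x + a) \<le> \<rho> * t n" if n: "n \<in> N" for n
        proof (cases "n \<bullet> x \<le> \<rho> * t n - K")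
          case True
          have nn: "norm n = 1" using N(1) n by auto
          have "n \<bullet> a \<le> norm n * norm a" by (rule norm_cauchy_schwarz)
          then have "n \<bullet> a \<le> K" using nn na by simp
          then show ?thesis using True by (simp add: inner_add_right)
        next
          case False
          have nn: "norm n = 1" using N(1) n by auto
          have "n \<bullet> a \<le> 0"
          proof (rule ccontr)
            assume "\<not> n \<bullet> a \<le> 0"
            then have pa: "0 < n \<bullet> a" by simp
            have ga: "g \<le> n \<bullet> a" using g(2)[OF n aA pa] .
            have ra: "r n * norm a \<le> n \<bullet> a / 2" using r(3)[OF aA pa] .
            have "\<rho> * (n \<bullet> q) > \<rho> * t n - K" using False unfolding x_def by simp
            then have nq: "n \<bullet> q > t n - K / \<rho>" using \<rho>pos by (simp add: field_simps)
            have "K / \<rho> \<le> rm^2 / 8" using \<rho>r' \<rho>pos by (simp add: field_simps)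
            also have "\<dots> \<le> (r n)^2 / 8" using rm(2)[OF n] rm(1) by (simp add: power_mono)
            finally have kr: "K / \<rho> \<le> (r n)^2 / 8" .
            have "n \<bullet> q > 1 - (r n)^2 / 2" using nq kr rsq[of n] unfolding t_def by linarith
            have "(norm (q - n))^2 = (norm q)^2 - 2 * (n \<bullet> q) + (norm n)^2"
              by (simp add: power2_norm_eq_inner inner_diff_left inner_diff_right inner_commute)
            also have "\<dots> \<le> 1 - 2 * (n \<bullet> q) + 1" using qn(1) nn norm_ge_zero[of q]
              by (simp add: power_le_one)
            also have "\<dots> \<le> (r n)^2" using \<open>n \<bullet> q > 1 - (r n)^2 / 2\<close> by simp
            finally have "norm (q - n) \<le> r n"
              using r(1)[of n] by (simp add: power2_le_iff_abs_le)
            have "- ((q - n) \<bullet> a) \<le> norm (q - n) * norm a"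
              using norm_cauchy_schwarz[of "-(q - n)" a] by (simp only: norm_minus_cancel inner_minus_left)
            also have "\<dots> \<le> r n * norm a" using \<open>norm (q - n) \<le> r n\<close> by (simp add: mult_right_mono)
            finally have "(q - n) \<bullet> a \<ge> - (n \<bullet> a / 2)" using ra by simp
            then have "q \<bullet> a \<ge> n \<bullet> a / 2" by (simp add: inner_diff_left)
            then have qa: "q \<bullet> a \<ge> g / 2" using ga by simp
            have "x \<bullet> a = \<rho> * (q \<bullet> a)" unfolding x_def by simp
            then have xa: "x \<bullet> a \<ge> \<rho> * (g / 2)" using qa \<rho>pos by (simp add: mult_left_mono)
            have "dist x vx \<le> dist x w" using vxclose[OF w] .
            then have "(norm (x - vx))^2 \<le> (norm (x - w))^2"
              by (simp add: dist_norm power_mono)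
            then have "2 * (x \<bullet> a) \<le> w \<bullet> w - vx \<bullet> vx"
              unfolding a_def by (simp add: power2_norm_eq_inner inner_diff_left inner_diff_right inner_commute)
            also have "\<dots> \<le> R^2"
            proof -
              have "w \<bullet> w = (norm w)^2" by (simp add: power2_norm_eq_inner)
              also have "\<dots> \<le> R^2" using Rw[OF wV] by (simp add: power_mono)
              finally show ?thesis using inner_ge_zero[of vx] by linarith
            qed
            finally have "\<rho> * g \<le> R^2" using xa by simp
            moreover have "R^2 + g \<le> \<rho> * g" using \<rho>g g(1) by (simp add: field_simps)
            ultimately show False using g(1) by simp
          qed
          then show ?thesis using xn[OF n] by (simp add: inner_add_right)
        qed
        then show ?thesis using nxa unfolding D_def a_def by blast
      qed
      define D' where "D' = {c. c + (x - vx) \<in> D}"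
      have "convex D'" unfolding convex_def D'_def
      proof (intro allI impI ballI, clarify)
        fix c1 c2 :: 'a and s1 s2 :: real
        assume h: "c1 + (x - vx) \<in> D" "c2 + (x - vx) \<in> D" "0 \<le> s1" "0 \<le> s2" "s1 + s2 = 1"
        have "s1 *\<^sub>R c1 + s2 *\<^sub>R c2 + (x - vx) = s1 *\<^sub>R (c1 + (x - vx)) + s2 *\<^sub>R (c2 + (x - vx))"
          using h(5) by (simp add: algebra_simps scaleR_left_distrib[symmetric])
        then show "s1 *\<^sub>R c1 + s2 *\<^sub>R c2 + (x - vx) \<in> D"
          using convexD[OF convD h(1,2) h(3,4,5)] by simp
      qed
      moreover have "{w. w extreme_point_of P j} \<subseteq> D'" unfolding D'_def
        using vert by (auto simp: algebra_simps)
      ultimately have "convex hull {w. w extreme_point_of P j} \<subseteq> D'" by (rule hull_minimal[rotated])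
      moreover have "P j \<subseteq> convex hull {w. w extreme_point_of P j}"
        using polytope_facts(2) assms(1) j by blast
      ultimately have "\<gamma> \<in> D'" using \<gamma> by blast
      then have "z \<in> D" unfolding D'_def z x_def[symmetric] vx_def[symmetric] phi_map_def
        by (simp add: algebra_simps)
      then show "z \<in> (\<lambda>q. \<rho> *\<^sub>R q) ` Q" by (rule Dimg)
    qed
  qed
  ultimately show ?thesis by blast
qed

end
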